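(* Let $F$ be a field of characteristic two and let $\mathfrak b$ be a bilinear $n$-fold Pfister form over $F$. If $\alpha\in Q(\mathfrak b)\setminus F^2$, then $\mathfrak i(\mathfrak b_{F(\sqrt\alpha)})=\mathfrak i(\mathfrak b)+1$.
   Context: A bilinear $n$-fold Pfister form is $\langle\!\langle\alpha_1,\dots,\alpha_n\rangle\!\rangle=\langle1,\alpha_1\rangle\otimes\cdots\otimes\langle1,\alpha_n\rangle$ with $\alpha_i\in F^\times$; $\langle\!\langle1\rangle\!\rangle^r$ denotes $\langle\!\langle1,\dots,1\rangle\!\rangle$ ($r$-fold), $\langle\!\langle1\rangle\!\rangle^0=\langle1\rangle$. Every bilinear Pfister form $\mathfrak b$ is isometric to $\langle\!\langle1\rangle\!\rangle^r\otimes\mathfrak b'$ for some integer $r\ge0$ and anisotropic bilinear Pfister form $\mathfrak b'$; this $r$ is denoted $\mathfrak i(\mathfrak b)$. $Q(\mathfrak b)=\{\mathfrak b(v,v)\mid v\ne0\}\cup\{0\}$. $\mathfrak b_K$ denotes scalar extension to $K$. *)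

theory Defs
  imports Main
begin

text \<open>Setting: an ambient field of type 'a; the base field F is a subfield S of it,
  given as a set. Bilinear forms of dimension m over S are represented by Gram
  matrices G :: nat => nat => 'a (indices < m) with entries in S.\<close>

definition is_subfield :: "'a::field set \<Rightarrow> bool" where
  "is_subfield S \<longleftrightarrow> 0 \<in> S \<and> 1 \<in> S \<and>
     (\<forall>x\<in>S. \<forall>y\<in>S. x + y \<in> S \<and> x * y \<in> S) \<and>
     (\<forall>x\<in>S. - x \<in> S) \<and> (\<forall>x\<in>S. x \<noteq> 0 \<longrightarrow> inverse x \<in> S)"

definition adjoin :: "'a::field set \<Rightarrow> 'a \<Rightarrow> 'a set" where
  "adjoin S s = \<Inter>{T. is_subfield T \<and> S \<subseteq> T \<and> s \<in> T}"

definition bval :: "nat \<Rightarrow> (nat \<Rightarrow> nat \<Rightarrow> 'a::field) \<Rightarrow> (nat \<Rightarrow> 'a) \<Rightarrow> (nat \<Rightarrow> 'a) \<Rightarrow> 'a" where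
  "bval m G v w = (\<Sum>i<m. \<Sum>j<m. v i * G i j * w j)"

definition vec_on :: "'a set \<Rightarrow> nat \<Rightarrow> (nat \<Rightarrow> 'a) \<Rightarrow> bool" where
  "vec_on S m v \<longleftrightarrow> (\<forall>i<m. v i \<in> S)"

definition nonzero_vec :: "nat \<Rightarrow> (nat \<Rightarrow> 'a::zero) \<Rightarrow> bool" where
  "nonzero_vec m v \<longleftrightarrow> (\<exists>i<m. v i \<noteq> 0)"

definition anisotropic_on :: "'a::field set \<Rightarrow> nat \<Rightarrow> (nat \<Rightarrow> nat \<Rightarrow> 'a) \<Rightarrow> bool" where
  "anisotropic_on S m G \<longleftrightarrow> (\<forall>v. vec_on S m v \<and> nonzero_vec m v \<longrightarrow> bval m G v v \<noteq> 0)"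

definition Q_on :: "'a::field set \<Rightarrow> nat \<Rightarrow> (nat \<Rightarrow> nat \<Rightarrow> 'a) \<Rightarrow> 'a set" where
  "Q_on S m G = {bval m G v v | v. vec_on S m v \<and> nonzero_vec m v} \<union> {0}"

definition iso_on :: "'a::field set \<Rightarrow> nat \<Rightarrow> (nat \<Rightarrow> nat \<Rightarrow> 'a) \<Rightarrow> (nat \<Rightarrow> nat \<Rightarrow> 'a) \<Rightarrow> bool" where
  "iso_on S m G H \<longleftrightarrow> (\<exists>P Q.
     (\<forall>i<m. \<forall>j<m. P i j \<in> S \<and> Q i j \<in> S) \<and>
     (\<forall>i<m. \<forall>j<m. (\<Sum>k<m. P i k * Q k j) = (if i = j then 1 else 0)) \<and>
     (\<forall>i<m. \<forall>j<m. (\<Sum>k<m. \<Sum>l<m. P k i * G k l * P l j) = H i j))"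

definition diag_gram :: "'a::zero list \<Rightarrow> nat \<Rightarrow> nat \<Rightarrow> 'a" where
  "diag_gram as i j = (if i = j then as ! i else 0)"

text \<open>Diagonal entries of <<a1,...,an>> = <1,a1> (x) ... (x) <1,an>.\<close>
fun pfister_list :: "'a::monoid_mult list \<Rightarrow> 'a list" where
  "pfister_list [] = [1]"
| "pfister_list (a # as) = pfister_list as @ map (\<lambda>x. a * x) (pfister_list as)"

definition pf_gram :: "'a::{monoid_mult,zero} list \<Rightarrow> nat \<Rightarrow> nat \<Rightarrow> 'a" where
  "pf_gram as = diag_gram (pfister_list as)"

text \<open>i(b) for b = <<as>> considered over S: the r with
  b \<cong> <<1>>^r (x) b', b' = <<bs>> an anisotropic bilinear Pfister form over S.
  Note <<1>>^r (x) <<bs>> = <<1,...,1,bs>>.\<close>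
definition pf_index :: "'a::field set \<Rightarrow> 'a list \<Rightarrow> nat" where
  "pf_index S as = (THE r. \<exists>bs. set bs \<subseteq> S - {0} \<and> r + length bs = length as \<and>
      anisotropic_on S (2 ^ length bs) (pf_gram bs) \<and>
      iso_on S (2 ^ length as) (pf_gram as) (pf_gram (replicate r 1 @ bs)))"

end

theory Submission
  imports Defs "HOL-Combinatorics.Permutations"
begin

lemma char2_two: "CHAR('a::field) = 2 \<Longrightarrow> (2::'a) = 0"
  by (metis of_nat_CHAR of_nat_numeral)

lemma char2_add_self: "CHAR('a::field) = 2 \<Longrightarrow> (x::'a) + x = 0"
  by (metis char2_two mult_2 mult_zero_left)

lemma char2_minus: "CHAR('a::field) = 2 \<Longrightarrow> - (x::'a) = x"
  by (metis add_eq_0_iff char2_add_self)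

lemma char2_sq_add: "CHAR('a::field) = 2 \<Longrightarrow> ((x::'a) + y)^2 = x^2 + y^2"
proof -
  assume c: "CHAR('a) = 2"
  have "(x+y)^2 = x^2 + y^2 + 2*x*y" by (simp add: power2_eq_square algebra_simps)
  then show ?thesis using char2_two[OF c] by simp
qed

lemma char2_sum_sq: "CHAR('a::field) = 2 \<Longrightarrow> (\<Sum>i\<in>A. (f i::'a))^2 = (\<Sum>i\<in>A. (f i)^2)"
proof (induction A rule: infinite_finite_induct)
  case (insert x F) then show ?case by (simp add: char2_sq_add)
qed auto

lemma sum_lessThan_add: "(\<Sum>i<a+(b::nat). f i) = (\<Sum>i<a. f i) + (\<Sum>i<b. f (i + a))"
  by (induction b) (auto simp: add.commute add.left_commute)

definition sh :: "nat \<Rightarrow> (nat \<Rightarrow> 'a) \<Rightarrow> nat \<Rightarrow> 'a" where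
  "sh k v = (\<lambda>i. v (i + k))"

lemma sh_apply[simp]: "sh k v i = v (i + k)" by (simp add: sh_def)

definition bv :: "'a::field list \<Rightarrow> (nat \<Rightarrow> 'a) \<Rightarrow> (nat \<Rightarrow> 'a) \<Rightarrow> 'a" where
  "bv d v w = (\<Sum>i<length d. v i * d!i * w i)"

lemma bval_diag: "bval (length d) (diag_gram d) v w = bv d v w"
  unfolding bval_def bv_def diag_gram_def
  by (simp add: if_distrib[of "\<lambda>x. _ * x * _"] cong: if_cong) 

lemma bv_append: "bv (d1 @ d2) v w = bv d1 v w + bv d2 (sh (length d1) v) (sh (length d1) w)"
  unfolding bv_def by (simp add: sum_lessThan_add nth_append add.commute)

lemma bv_map: "bv (map (\<lambda>x. c * x) d) v w = c * bv d v w"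
  unfolding bv_def by (simp add: sum_distrib_left algebra_simps)

lemma length_pl[simp]: "length (pfister_list as) = 2 ^ length as"
  by (induction as) auto

lemma bv_pl_Cons: "bv (pfister_list (c # cs)) v w
   = bv (pfister_list cs) v w + c * bv (pfister_list cs) (sh (2^length cs) v) (sh (2^length cs) w)"
  by (simp add: bv_append bv_map)

lemma bv_cong: "(\<And>i. i < length d \<Longrightarrow> v i = v' i) \<Longrightarrow> (\<And>i. i < length d \<Longrightarrow> w i = w' i)
   \<Longrightarrow> bv d v w = bv d v' w'"
  unfolding bv_def by (rule sum.cong) auto

lemma bval_cong: "(\<And>i. i < m \<Longrightarrow> v i = v' i) \<Longrightarrow> (\<And>i. i < m \<Longrightarrow> w i = w' i)
   \<Longrightarrow> bval m G v w = bval m G v' w'"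
  unfolding bval_def by (intro sum.cong) auto

lemma sf_0: "is_subfield S \<Longrightarrow> 0 \<in> S" by (simp add: is_subfield_def)
lemma sf_1: "is_subfield S \<Longrightarrow> 1 \<in> S" by (simp add: is_subfield_def)
lemma sf_add: "is_subfield S \<Longrightarrow> x \<in> S \<Longrightarrow> y \<in> S \<Longrightarrow> x + y \<in> S" by (simp add: is_subfield_def)
lemma sf_mult: "is_subfield S \<Longrightarrow> x \<in> S \<Longrightarrow> y \<in> S \<Longrightarrow> x * y \<in> S" by (simp add: is_subfield_def)
lemma sf_uminus: "is_subfield S \<Longrightarrow> x \<in> S \<Longrightarrow> - x \<in> S" by (simp add: is_subfield_def)
lemma sf_diff: "is_subfield S \<Longrightarrow> x \<in> S \<Longrightarrow> y \<in> S \<Longrightarrow> x - y \<in> S"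
  by (metis diff_conv_add_uminus sf_add sf_uminus)
lemma sf_inverse: "is_subfield S \<Longrightarrow> x \<in> S \<Longrightarrow> inverse x \<in> S"
  by (cases "x = 0") (auto simp: is_subfield_def)
lemma sf_divide: "is_subfield S \<Longrightarrow> x \<in> S \<Longrightarrow> y \<in> S \<Longrightarrow> x / y \<in> S"
  by (simp add: divide_inverse sf_inverse sf_mult)
lemma sf_sum: "is_subfield S \<Longrightarrow> (\<And>i. i \<in> A \<Longrightarrow> f i \<in> S) \<Longrightarrow> sum f A \<in> S"
proof (induction A rule: infinite_finite_induct)
  case (insert x F) then show ?case by (simp add: sf_add)
qed (auto simp: sf_0)
lemma sf_power: "is_subfield S \<Longrightarrow> x \<in> S \<Longrightarrow> x ^ n \<in> S"
  by (induction n) (auto simp: sf_1 sf_mult)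

section \<open>Isometries via linear maps\<close>

definition unit :: "nat \<Rightarrow> nat \<Rightarrow> 'a::field" where
  "unit k = (\<lambda>i. if i = k then 1 else 0)"

definition mform :: "nat \<Rightarrow> ((nat \<Rightarrow> 'a::field) \<Rightarrow> nat \<Rightarrow> 'a) \<Rightarrow> bool" where
  "mform m f \<longleftrightarrow> (\<forall>v i. i < m \<longrightarrow> f v i = (\<Sum>k<m. v k * f (unit k) i))"

definition miso :: "'a::field set \<Rightarrow> nat \<Rightarrow> (nat \<Rightarrow> nat \<Rightarrow> 'a) \<Rightarrow> (nat \<Rightarrow> nat \<Rightarrow> 'a) \<Rightarrow> bool" where
  "miso S m G H \<longleftrightarrow> (\<exists>f g. mform m f \<and> mform m g \<and>
     (\<forall>v. vec_on S m v \<longrightarrow> vec_on S m (f v)) \<and> (\<forall>v. vec_on S m v \<longrightarrow> vec_on S m (g v)) \<and>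
     (\<forall>v i. i < m \<longrightarrow> f (g v) i = v i) \<and> (\<forall>v w. bval m G (f v) (f w) = bval m H v w))"

lemma vec_on_unit: "is_subfield S \<Longrightarrow> vec_on S m (unit k)"
  by (simp add: vec_on_def unit_def sf_0 sf_1)

lemma mform_cong: "mform m f \<Longrightarrow> (\<And>k. k < m \<Longrightarrow> v k = v' k) \<Longrightarrow> i < m \<Longrightarrow> f v i = f v' i"
  unfolding mform_def by (metis (no_types, lifting) lessThan_iff sum.cong)

lemma mform_zero: "mform m f \<Longrightarrow> i < m \<Longrightarrow> f (\<lambda>_. 0) i = 0"
  unfolding mform_def by simp

lemma sum_unit_left: "k < m \<Longrightarrow> (\<Sum>i<m. unit k i * f i) = (f k::'a::field)"
proof -
  assume k: "k < m"
  have "(\<Sum>i<m. unit k i * f i) = (\<Sum>i<m. if i = k then f i else 0)"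
    by (intro sum.cong) (auto simp: unit_def)
  then show ?thesis using k by simp
qed
lemma sum_unit_right: "k < m \<Longrightarrow> (\<Sum>i<m. f i * unit k i) = (f k::'a::field)"
  using sum_unit_left[of k m f] by (simp add: mult.commute)

lemma bval_unit: "i < m \<Longrightarrow> j < m \<Longrightarrow> bval m H (unit i) (unit j) = H i j"
  unfolding bval_def by (simp add: sum_unit_left sum_unit_right)

lemma sum4_swap: "(\<Sum>k\<in>A. \<Sum>l\<in>B. \<Sum>a\<in>C. \<Sum>b\<in>D. X k l a b)
   = (\<Sum>a\<in>C. \<Sum>b\<in>D. \<Sum>k\<in>A. \<Sum>l\<in>B. X k l a b)"
proof -
  have "(\<Sum>k\<in>A. \<Sum>l\<in>B. \<Sum>a\<in>C. \<Sum>b\<in>D. X k l a b) = (\<Sum>k\<in>A. \<Sum>a\<in>C. \<Sum>l\<in>B. \<Sum>b\<in>D. X k l a b)"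
    by (rule sum.cong[OF refl], rule sum.swap)
  also have "\<dots> = (\<Sum>a\<in>C. \<Sum>k\<in>A. \<Sum>l\<in>B. \<Sum>b\<in>D. X k l a b)" by (rule sum.swap)
  also have "\<dots> = (\<Sum>a\<in>C. \<Sum>k\<in>A. \<Sum>b\<in>D. \<Sum>l\<in>B. X k l a b)"
    by (rule sum.cong[OF refl], rule sum.cong[OF refl], rule sum.swap)
  also have "\<dots> = (\<Sum>a\<in>C. \<Sum>b\<in>D. \<Sum>k\<in>A. \<Sum>l\<in>B. X k l a b)"
    by (rule sum.cong[OF refl], rule sum.swap)
  finally show ?thesis .
qed

lemma miso_iso:
  assumes S: "is_subfield S" and "miso S m G H"
  shows "iso_on S m G H"
proof -
  obtain f g where f: "mform m f" and g: "mform m g" and fS: "\<forall>v. vec_on S m v \<longrightarrow> vec_on S m (f v)"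
    and gS: "\<forall>v. vec_on S m v \<longrightarrow> vec_on S m (g v)" and fg: "\<forall>v i. i < m \<longrightarrow> f (g v) i = v i"
    and b: "\<forall>v w. bval m G (f v) (f w) = bval m H v w"
    using assms(2) unfolding miso_def by blast
  define P where "P i j = f (unit j) i" for i j
  define Q where "Q i j = g (unit j) i" for i j
  have 1: "\<forall>i<m. \<forall>j<m. P i j \<in> S \<and> Q i j \<in> S"
    using fS gS vec_on_unit[OF S] unfolding P_def Q_def vec_on_def by blast
  have 2: "(\<Sum>k<m. P i k * Q k j) = (if i = j then 1 else 0)" if "i < m" "j < m" for i j
  proof -
    have "(\<Sum>k<m. P i k * Q k j) = f (g (unit j)) i"
      using f that unfolding mform_def P_def Q_def by (simp add: mult.commute)
    also have "\<dots> = unit j i" using fg that by blast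
    finally show ?thesis by (simp add: unit_def)
  qed
  have 3: "(\<Sum>k<m. \<Sum>l<m. P k i * G k l * P l j) = H i j" if "i < m" "j < m" for i j
  proof -
    have "(\<Sum>k<m. \<Sum>l<m. P k i * G k l * P l j) = bval m G (f (unit i)) (f (unit j))"
      unfolding bval_def P_def ..
    also have "\<dots> = H i j" using b bval_unit that by metis
    finally show ?thesis .
  qed
  show ?thesis unfolding iso_on_def using 1 2 3 by blast
qed

lemma iso_miso:
  assumes S: "is_subfield S" and "iso_on S m G H"
  shows "miso S m G H"
proof -
  obtain P Q where PQ: "\<forall>i<m. \<forall>j<m. P i j \<in> S \<and> Q i j \<in> S"
    and inv: "\<forall>i<m. \<forall>j<m. (\<Sum>k<m. P i k * Q k j) = (if i = j then 1 else 0)"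
    and h: "\<forall>i<m. \<forall>j<m. (\<Sum>k<m. \<Sum>l<m. P k i * G k l * P l j) = H i j"
    using assms(2) unfolding iso_on_def by blast
  define f where "f v = (\<lambda>i. \<Sum>k<m. P i k * v k)" for v
  define g where "g v = (\<lambda>i. \<Sum>k<m. Q i k * v k)" for v
  have fm: "mform m f" unfolding mform_def f_def
    by (auto simp: sum_unit_left sum_unit_right mult.commute intro!: sum.cong)
  have gm: "mform m g" unfolding mform_def g_def
    by (auto simp: sum_unit_left sum_unit_right mult.commute intro!: sum.cong)
  have fS: "vec_on S m (f v)" if "vec_on S m v" for v
    using that PQ unfolding vec_on_def f_def by (auto intro!: sf_sum[OF S] sf_mult[OF S])
  have gS: "vec_on S m (g v)" if "vec_on S m v" for v
    using that PQ unfolding vec_on_def g_def by (auto intro!: sf_sum[OF S] sf_mult[OF S])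
  have fg: "f (g v) i = v i" if "i < m" for v i
  proof -
    have "f (g v) i = (\<Sum>k<m. \<Sum>l<m. P i k * Q k l * v l)"
      unfolding f_def g_def by (simp add: sum_distrib_left mult.assoc)
    also have "\<dots> = (\<Sum>l<m. (\<Sum>k<m. P i k * Q k l) * v l)"
      by (subst sum.swap) (simp add: sum_distrib_right)
    also have "\<dots> = (\<Sum>l<m. unit i l * v l)"
      using inv that by (intro sum.cong) (auto simp: unit_def)
    also have "\<dots> = v i" using that by (simp add: sum_unit_left)
    finally show ?thesis .
  qed
  have b: "bval m G (f v) (f w) = bval m H v w" for v w
  proof -
    have "bval m G (f v) (f w) = (\<Sum>k<m. \<Sum>l<m. \<Sum>a<m. \<Sum>b<m. v a * (P k a * G k l * P l b) * w b)"
      unfolding bval_def f_def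
      by (simp add: sum_distrib_left sum_distrib_right mult_ac)
    also have "\<dots> = (\<Sum>a<m. \<Sum>b<m. v a * (\<Sum>k<m. \<Sum>l<m. P k a * G k l * P l b) * w b)"
      by (subst sum4_swap) (simp add: sum_distrib_left sum_distrib_right)
    also have "\<dots> = bval m H v w" unfolding bval_def using h by (auto intro!: sum.cong)
    finally show ?thesis .
  qed
  show ?thesis unfolding miso_def using fm gm fS gS fg b by blast
qed

lemma unit_sym: "unit k i = unit i k" by (simp add: unit_def)

lemma sum_unit_right2: "k < m \<Longrightarrow> (\<Sum>i<m. f i * unit i k) = (f k::'a::field)"
  using sum_unit_right[of k m f] by (simp add: unit_sym)

lemma mform_id: "mform m (\<lambda>v. v)"
  unfolding mform_def by (auto simp: sum_unit_right2)

lemma mform_comp: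
  assumes f: "mform m f" and g: "mform m g"
  shows "mform m (\<lambda>v. f (g v))"
  unfolding mform_def
proof (intro allI impI)
  fix v i assume i: "i < m"
  have "f (g v) i = (\<Sum>a<m. g v a * f (unit a) i)" using f i unfolding mform_def by blast
  also have "\<dots> = (\<Sum>a<m. \<Sum>k<m. v k * g (unit k) a * f (unit a) i)"
    using g unfolding mform_def by (auto simp: sum_distrib_right intro!: sum.cong)
  also have "\<dots> = (\<Sum>k<m. v k * (\<Sum>a<m. g (unit k) a * f (unit a) i))"
    by (subst sum.swap) (simp add: sum_distrib_left mult.assoc)
  also have "\<dots> = (\<Sum>k<m. v k * f (g (unit k)) i)"
    using f i unfolding mform_def by (auto intro!: sum.cong)
  finally show "f (g v) i = (\<Sum>k<m. v k * f (g (unit k)) i)" .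
qed

lemma miso_refl: "is_subfield S \<Longrightarrow> miso S m G G"
  unfolding miso_def using mform_id by blast

lemma miso_trans:
  assumes "miso S m G H1" "miso S m H1 H2"
  shows "miso S m G H2"
proof -
  obtain f1 g1 where f1: "mform m f1" and g1: "mform m g1" and f1S: "\<forall>v. vec_on S m v \<longrightarrow> vec_on S m (f1 v)"
    and g1S: "\<forall>v. vec_on S m v \<longrightarrow> vec_on S m (g1 v)" and fg1: "\<forall>v i. i < m \<longrightarrow> f1 (g1 v) i = v i"
    and b1: "\<forall>v w. bval m G (f1 v) (f1 w) = bval m H1 v w"
    using assms(1) unfolding miso_def by blast
  obtain f2 g2 where f2: "mform m f2" and g2: "mform m g2" and f2S: "\<forall>v. vec_on S m v \<longrightarrow> vec_on S m (f2 v)"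
    and g2S: "\<forall>v. vec_on S m v \<longrightarrow> vec_on S m (g2 v)" and fg2: "\<forall>v i. i < m \<longrightarrow> f2 (g2 v) i = v i"
    and b2: "\<forall>v w. bval m H1 (f2 v) (f2 w) = bval m H2 v w"
    using assms(2) unfolding miso_def by blast
  have "\<forall>v i. i < m \<longrightarrow> f1 (f2 (g2 (g1 v))) i = v i"
  proof (intro allI impI)
    fix v i assume "i < m"
    then have "f1 (f2 (g2 (g1 v))) i = f1 (g1 v) i" using fg2 by (intro mform_cong[OF f1]) auto
    then show "f1 (f2 (g2 (g1 v))) i = v i" using fg1 \<open>i < m\<close> by simp
  qed
  then show ?thesis unfolding miso_def
    using mform_comp[OF f1 f2] mform_comp[OF g2 g1] f1S f2S g1S g2S b1 b2
    by (intro exI[of _ "\<lambda>v. f1 (f2 v)"] exI[of _ "\<lambda>v. g2 (g1 v)"]) auto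
qed

definition diso :: "'a::field set \<Rightarrow> 'a list \<Rightarrow> 'a list \<Rightarrow> bool" where
  "diso S d d' \<longleftrightarrow> length d = length d' \<and> miso S (length d) (diag_gram d) (diag_gram d')"

lemma diso_refl: "is_subfield S \<Longrightarrow> diso S d d"
  by (simp add: diso_def miso_refl)

lemma diso_trans: "diso S d1 d2 \<Longrightarrow> diso S d2 d3 \<Longrightarrow> diso S d1 d3"
  unfolding diso_def by (metis miso_trans)

lemma diso_I:
  assumes "length d = length d'" "mform (length d) f" "mform (length d) g"
    "\<And>v. vec_on S (length d) v \<Longrightarrow> vec_on S (length d) (f v)"
    "\<And>v. vec_on S (length d) v \<Longrightarrow> vec_on S (length d) (g v)"
    "\<And>v i. i < length d \<Longrightarrow> f (g v) i = v i"
    "\<And>v w. bv d (f v) (f w) = bv d' v w"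
  shows "diso S d d'"
  unfolding diso_def miso_def using assms
  by (metis bval_diag)

lemma diso_E:
  assumes "diso S d d'"
  obtains f g where "length d = length d'" "mform (length d) f" "mform (length d) g"
    "\<And>v. vec_on S (length d) v \<Longrightarrow> vec_on S (length d) (f v)"
    "\<And>v. vec_on S (length d) v \<Longrightarrow> vec_on S (length d) (g v)"
    "\<And>v i. i < length d \<Longrightarrow> f (g v) i = v i"
    "\<And>v w. bv d (f v) (f w) = bv d' v w"
proof -
  have l: "length d = length d'" using assms by (simp add: diso_def)
  obtain f g where "mform (length d) f" "mform (length d) g"
    "\<And>v. vec_on S (length d) v \<Longrightarrow> vec_on S (length d) (f v)"
    "\<And>v. vec_on S (length d) v \<Longrightarrow> vec_on S (length d) (g v)"
    "\<And>v i. i < length d \<Longrightarrow> f (g v) i = v i"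
    "\<And>v w. bval (length d) (diag_gram d) (f v) (f w) = bval (length d) (diag_gram d') v w"
    using assms unfolding diso_def miso_def by blast
  then show ?thesis using that l by (metis bval_diag)
qed

lemma diso_scale:
  assumes "diso S d d'"
  shows "diso S (map (\<lambda>x. c * x) d) (map (\<lambda>x. c * x) d')"
proof -
  obtain f g where "length d = length d'" "mform (length d) f" "mform (length d) g"
    "\<And>v. vec_on S (length d) v \<Longrightarrow> vec_on S (length d) (f v)"
    "\<And>v. vec_on S (length d) v \<Longrightarrow> vec_on S (length d) (g v)"
    "\<And>v i. i < length d \<Longrightarrow> f (g v) i = v i"
    "\<And>v w. bv d (f v) (f w) = bv d' v w"
    using diso_E[OF assms] by blast
  then show ?thesis by (intro diso_I[where f = f and g = g]) (auto simp: bv_map)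
qed

lemma diso_append:
  assumes A: "diso S d1 d1'" and B: "diso S d2 d2'"
  shows "diso S (d1 @ d2) (d1' @ d2')"
proof -
  obtain f1 g1 where l1: "length d1 = length d1'" and f1: "mform (length d1) f1" and g1: "mform (length d1) g1"
    and f1S: "\<And>v. vec_on S (length d1) v \<Longrightarrow> vec_on S (length d1) (f1 v)"
    and g1S: "\<And>v. vec_on S (length d1) v \<Longrightarrow> vec_on S (length d1) (g1 v)"
    and fg1: "\<And>v i. i < length d1 \<Longrightarrow> f1 (g1 v) i = v i"
    and b1: "\<And>v w. bv d1 (f1 v) (f1 w) = bv d1' v w"
    using diso_E[OF A] by blast
  obtain f2 g2 where l2: "length d2 = length d2'" and f2: "mform (length d2) f2" and g2: "mform (length d2) g2"
    and f2S: "\<And>v. vec_on S (length d2) v \<Longrightarrow> vec_on S (length d2) (f2 v)"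
    and g2S: "\<And>v. vec_on S (length d2) v \<Longrightarrow> vec_on S (length d2) (g2 v)"
    and fg2: "\<And>v i. i < length d2 \<Longrightarrow> f2 (g2 v) i = v i"
    and b2: "\<And>v w. bv d2 (f2 v) (f2 w) = bv d2' v w"
    using diso_E[OF B] by blast
  define m1 where "m1 = length d1"
  define m2 where "m2 = length d2"
  define F where "F f1 f2 v = (\<lambda>i. if i < m1 then f1 v i else f2 (sh m1 v) (i - m1))"
    for f1 f2 :: "(nat \<Rightarrow> 'a) \<Rightarrow> nat \<Rightarrow> 'a" and v
  have mf: "mform (m1 + m2) (F f1 f2)" if f1: "mform m1 f1" and f2: "mform m2 f2" for f1 f2
    unfolding mform_def
  proof (intro allI impI)
    fix v i assume i: "i < m1 + m2"
    show "F f1 f2 v i = (\<Sum>k<m1 + m2. v k * F f1 f2 (unit k) i)"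
    proof (cases "i < m1")
      case True
      have z: "f1 (unit (k + m1)) i = 0" for k
      proof -
        have "f1 (unit (k + m1)) i = f1 (\<lambda>_. 0) i"
          by (rule mform_cong[OF f1 _ True]) (simp add: unit_def)
        then show ?thesis using mform_zero[OF f1 True] by simp
      qed
      have e: "f1 v i = (\<Sum>k<m1. v k * f1 (unit k) i)" using f1 True unfolding mform_def by blast
      show ?thesis using True z e unfolding F_def by (simp add: sum_lessThan_add)
    next
      case False
      have z: "f2 (sh m1 (unit k)) (i - m1) = 0" if "k < m1" for k
      proof -
        have "sh m1 (unit k) = (\<lambda>_. 0::'a)" using that by (auto simp: unit_def fun_eq_iff)
        moreover have "i - m1 < m2" using i False by simp
        ultimately show ?thesis using mform_zero[OF f2] by simp
      qed
      have u: "sh m1 (unit (k + m1)) = (unit k :: nat \<Rightarrow> 'a)" for k by (auto simp: unit_def fun_eq_iff)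
      have "f2 (sh m1 v) (i - m1) = (\<Sum>k<m2. v (k + m1) * f2 (unit k) (i - m1))"
      proof -
        have "i - m1 < m2" using i False by simp
        then show ?thesis using f2 unfolding mform_def sh_def by blast
      qed
      then show ?thesis using False z u unfolding F_def by (simp add: sum_lessThan_add)
    qed
  qed
  have vS: "vec_on S (m1 + m2) (F f1 f2 v)" if "vec_on S (m1 + m2) v"
    and f1S: "\<And>v. vec_on S m1 v \<Longrightarrow> vec_on S m1 (f1 v)"
    and f2S: "\<And>v. vec_on S m2 v \<Longrightarrow> vec_on S m2 (f2 v)" for f1 f2 v
  proof -
    have "vec_on S m1 v" using that(1) by (simp add: vec_on_def)
    moreover have "vec_on S m2 (sh m1 v)" using that(1) by (simp add: vec_on_def)
    ultimately have a: "\<forall>i<m1. f1 v i \<in> S" and b: "\<forall>i<m2. f2 (sh m1 v) i \<in> S"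
      using f1S f2S unfolding vec_on_def by blast+
    show ?thesis unfolding vec_on_def F_def
    proof (intro allI impI)
      fix i assume "i < m1 + m2"
      then show "(if i < m1 then f1 v i else f2 (sh m1 v) (i - m1)) \<in> S"
        using a b by (cases "i < m1") auto
    qed
  qed
  have sh: "sh m1 (F f1 f2 v) = f2 (sh m1 v)" for f1 f2 v
    unfolding F_def by (auto simp: fun_eq_iff)
  have fg: "F f1 f2 (F g1 g2 v) i = v i" if "i < m1 + m2" for v i
  proof (cases "i < m1")
    case True
    have "f1 (F g1 g2 v) i = f1 (g1 v) i"
      by (rule mform_cong[OF f1[folded m1_def] _ True]) (simp add: F_def)
    then show ?thesis using True fg1 unfolding F_def m1_def by simp
  next
    case False
    have "F f1 f2 (F g1 g2 v) i = f2 (sh m1 (F g1 g2 v)) (i - m1)"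
      using False by (simp only: F_def[of f1 f2 "F g1 g2 v"] if_False)
    also have "\<dots> = f2 (g2 (sh m1 v)) (i - m1)" by (simp only: sh)
    also have "\<dots> = v i" using fg2 that False m2_def by simp
    finally show ?thesis .
  qed
  have b: "bv (d1 @ d2) (F f1 f2 v) (F f1 f2 w) = bv (d1' @ d2') v w" for v w
  proof -
    have "bv d1 (F f1 f2 v) (F f1 f2 w) = bv d1 (f1 v) (f1 w)"
      by (rule bv_cong) (auto simp: F_def m1_def)
    have "bv (d1 @ d2) (F f1 f2 v) (F f1 f2 w)
        = bv d1 (F f1 f2 v) (F f1 f2 w) + bv d2 (sh m1 (F f1 f2 v)) (sh m1 (F f1 f2 w))"
      unfolding m1_def by (rule bv_append)
    also have "\<dots> = bv d1' v w + bv d2' (sh m1 v) (sh m1 w)"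
      unfolding sh \<open>bv d1 (F f1 f2 v) (F f1 f2 w) = bv d1 (f1 v) (f1 w)\<close> b1 b2 ..
    also have "\<dots> = bv (d1' @ d2') v w" using l1 by (simp add: bv_append m1_def)
    finally show ?thesis .
  qed
  have len: "length (d1 @ d2) = m1 + m2" by (simp add: m1_def m2_def)
  show ?thesis
    apply (rule diso_I[where f = "F f1 f2" and g = "F g1 g2"])
          apply (simp add: l1 l2 m1_def m2_def)
    unfolding len
         apply (rule mf[OF f1[folded m1_def] f2[folded m2_def]])
        apply (rule mf[OF g1[folded m1_def] g2[folded m2_def]])
       apply (erule vS[OF _ f1S[folded m1_def] f2S[folded m2_def]], assumption+)
      apply (erule vS[OF _ g1S[folded m1_def] g2S[folded m2_def]], assumption+)
     apply (erule fg)
    apply (rule b)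
    done
qed

lemma diso_perm:
  assumes S: "is_subfield S" and M: "mset d = mset d'"
  shows "diso S d d'"
proof -
  obtain p where p: "p permutes {..<length d'}" and pl: "permute_list p d' = d"
    using mset_eq_permutation[OF M] by blast
  have l: "length d = length d'" using pl by auto
  have dp: "d ! i = d' ! p i" if "i < length d" for i
    using permute_list_nth[OF p] that l pl by auto
  have pin: "p i < length d" if "i < length d" for i using permutes_in_image[OF p] that l by auto
  have ipin: "inv p i < length d" if "i < length d" for i
    using permutes_in_image[OF permutes_inv[OF p]] that l by auto
  show ?thesis
  proof (rule diso_I[where f = "\<lambda>v i. v (p i)" and g = "\<lambda>v i. v (inv p i)"])
    show "length d = length d'" by fact
    show "mform (length d) (\<lambda>v i. v (p i))"
      unfolding mform_def using pin by (auto simp: sum_unit_right2)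
    show "mform (length d) (\<lambda>v i. v (inv p i))"
      unfolding mform_def using ipin by (auto simp: sum_unit_right2)
    show "vec_on S (length d) (\<lambda>i. v (p i))" if "vec_on S (length d) v" for v
      using that pin by (auto simp: vec_on_def)
    show "vec_on S (length d) (\<lambda>i. v (inv p i))" if "vec_on S (length d) v" for v
      using that ipin by (auto simp: vec_on_def)
    show "v (inv p (p i)) = v i" for v i using permutes_inverses(2)[OF p] by simp
    show "bv d (\<lambda>i. v (p i)) (\<lambda>i. w (p i)) = bv d' v w" for v w
    proof -
      have "bv d (\<lambda>i. v (p i)) (\<lambda>i. w (p i)) = (\<Sum>i<length d'. v (p i) * d' ! p i * w (p i))"
        unfolding bv_def using dp l by (auto intro!: sum.cong)
      also have "\<dots> = (\<Sum>i<length d'. v i * d' ! i * w i)"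
        using sum.permute[OF p, of "\<lambda>i. v i * d' ! i * w i"] by (simp add: comp_def)
      finally show ?thesis by (simp add: bv_def)
    qed
  qed
qed

lemma pm_swap: fixes a b :: "'a::comm_monoid_mult" shows "mset (pfister_list (a # b # ys)) = mset (pfister_list (b # a # ys))"
proof -
  have e: "(\<lambda>x::'a. a * (b * x)) = (\<lambda>x. b * (a * x))" by (rule ext, rule mult.left_commute)
  show ?thesis by (simp add: multiset.map_comp comp_def ac_simps e)
qed

lemma pm_cong: "mset (pfister_list xs) = mset (pfister_list ys) \<Longrightarrow>
   mset (pfister_list (a # xs)) = mset (pfister_list (a # ys))"
  by (simp add: image_mset_def[symmetric])

lemma pm_move: fixes a :: "'a::comm_monoid_mult" shows "mset (pfister_list (a # replicate r 1 @ bs)) = mset (pfister_list (replicate r 1 @ a # bs))"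
proof (induction r)
  case (Suc r)
  have "mset (pfister_list (a # replicate (Suc r) 1 @ bs)) = mset (pfister_list (1 # a # replicate r 1 @ bs))"
    by (simp only: replicate_Suc append_Cons) (rule pm_swap)
  also have "\<dots> = mset (pfister_list (1 # replicate r 1 @ a # bs))" by (rule pm_cong[OF Suc])
  finally show ?case by simp
qed simp

lemma diso_pl_Cons: "diso S (pfister_list xs) (pfister_list ys) \<Longrightarrow>
   diso S (pfister_list (a # xs)) (pfister_list (a # ys))"
  by (simp add: diso_append diso_scale)


fun mulv :: "'a::field list \<Rightarrow> (nat \<Rightarrow> 'a) \<Rightarrow> (nat \<Rightarrow> 'a) \<Rightarrow> nat \<Rightarrow> 'a" where
  "mulv [] y v = (\<lambda>i. if i = 0 then y 0 * v 0 else 0)"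
| "mulv (c # cs) y v = (\<lambda>i. if i < 2 ^ length cs then
       mulv cs y v i + c * mulv cs (sh (2 ^ length cs) y) (sh (2 ^ length cs) v) i
     else if i < 2 * 2 ^ length cs then
       mulv cs (sh (2 ^ length cs) y) v (i - 2 ^ length cs) + mulv cs y (sh (2 ^ length cs) v) (i - 2 ^ length cs)
     else 0)"

lemma mulv_zero_out: "i \<ge> 2 ^ length cs \<Longrightarrow> mulv cs y v i = 0"
  by (induction cs arbitrary: y v i) auto

lemma mulv_cong: "(\<And>i. i < 2 ^ length cs \<Longrightarrow> y i = y' i) \<Longrightarrow> (\<And>i. i < 2 ^ length cs \<Longrightarrow> v i = v' i)
  \<Longrightarrow> mulv cs y v = mulv cs y' v'"
proof (induction cs arbitrary: y v y' v')
  case Nil then show ?case by auto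
next
  case (Cons c cs)
  let ?m = "2 ^ length cs"
  have a: "mulv cs y v = mulv cs y' v'" by (rule Cons.IH) (use Cons.prems in auto)
  have b: "mulv cs (sh ?m y) (sh ?m v) = mulv cs (sh ?m y') (sh ?m v')" by (rule Cons.IH) (use Cons.prems in auto)
  have c: "mulv cs (sh ?m y) v = mulv cs (sh ?m y') v'" by (rule Cons.IH) (use Cons.prems in auto)
  have d: "mulv cs y (sh ?m v) = mulv cs y' (sh ?m v')" by (rule Cons.IH) (use Cons.prems in auto)
  show ?case by (simp only: mulv.simps a b c d)
qed

lemma mulv_add: "mulv cs y (\<lambda>i. v i + w i) = (\<lambda>i. mulv cs y v i + mulv cs y w i)"
proof (induction cs arbitrary: y v w)
  case (Cons c cs) then show ?case by (auto simp: fun_eq_iff algebra_simps sh_def)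
qed (auto simp: fun_eq_iff algebra_simps)

lemma mulv_scale: "mulv cs y (\<lambda>i. a * v i) = (\<lambda>i. a * mulv cs y v i)"
proof (induction cs arbitrary: y v)
  case (Cons c cs) then show ?case by (auto simp: fun_eq_iff algebra_simps sh_def)
qed (auto simp: fun_eq_iff algebra_simps)

lemma mulv_add_y: "mulv cs (\<lambda>i. y i + z i) v = (\<lambda>i. mulv cs y v i + mulv cs z v i)"
proof (induction cs arbitrary: y z v)
  case (Cons c cs) then show ?case by (auto simp: fun_eq_iff algebra_simps sh_def)
qed (auto simp: fun_eq_iff algebra_simps)

lemma bv_add1: "bv d (\<lambda>i. u i + u' i) w = bv d u w + bv d u' w"
  unfolding bv_def by (simp add: sum.distrib algebra_simps)
lemma bv_add2: "bv d w (\<lambda>i. u i + u' i) = bv d w u + bv d w u'"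
  unfolding bv_def by (simp add: sum.distrib algebra_simps)
lemma bv_scale1: "bv d (\<lambda>i. a * u i) w = a * bv d u w"
  unfolding bv_def by (simp add: sum_distrib_left algebra_simps)
lemma bv_scale2: "bv d w (\<lambda>i. a * u i) = a * bv d w u"
  unfolding bv_def by (simp add: sum_distrib_left algebra_simps)

lemma mulv_first: "mulv cs y (mulv (c # cs) z w)
   = mulv cs y (\<lambda>i. mulv cs z w i + c * mulv cs (sh (2 ^ length cs) z) (sh (2 ^ length cs) w) i)"
  by (rule mulv_cong) auto

lemma sh_mulv: "sh (2 ^ length cs) (mulv (c # cs) z w)
   = (\<lambda>i. mulv cs (sh (2 ^ length cs) z) w i + mulv cs z (sh (2 ^ length cs) w) i)"
proof (rule ext)
  fix i
  show "sh (2 ^ length cs) (mulv (c # cs) z w) i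
     = mulv cs (sh (2 ^ length cs) z) w i + mulv cs z (sh (2 ^ length cs) w) i"
  proof (cases "i < 2 ^ length cs")
    case False then show ?thesis by (simp add: mulv_zero_out)
  qed simp
qed

lemma bv_first: "bv (pfister_list cs) (mulv (c # cs) z w) u
   = bv (pfister_list cs) (\<lambda>i. mulv cs z w i + c * mulv cs (sh (2 ^ length cs) z) (sh (2 ^ length cs) w) i) u"
  by (rule bv_cong) auto
lemma bv_first2: "bv (pfister_list cs) u (mulv (c # cs) z w)
   = bv (pfister_list cs) u (\<lambda>i. mulv cs z w i + c * mulv cs (sh (2 ^ length cs) z) (sh (2 ^ length cs) w) i)"
  by (rule bv_cong) auto

lemma mulv_comm: "mulv cs y (mulv cs z w) = mulv cs z (mulv cs y w)"
proof (induction cs arbitrary: y z w)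
  case Nil then show ?case by (auto simp: fun_eq_iff)
next
  case (Cons c cs)
  let ?m = "2 ^ length cs"
  note IH = Cons.IH
  show ?case
  proof (rule ext)
    fix i
    show "mulv (c # cs) y (mulv (c # cs) z w) i = mulv (c # cs) z (mulv (c # cs) y w) i"
      apply (simp only: mulv.simps(2)[of c cs y "mulv (c # cs) z w"] mulv.simps(2)[of c cs z "mulv (c # cs) y w"])
      apply (simp only: mulv_first sh_mulv mulv_add mulv_scale)
      apply (simp del: sh_apply add: IH[of y z w] IH[of y "sh ?m z" "sh ?m w"] IH[of "sh ?m y" "sh ?m z" w]
          IH[of "sh ?m y" z "sh ?m w"] IH[of y z "sh ?m w"] IH[of y "sh ?m z" w] IH[of "sh ?m y" z w]
          IH[of "sh ?m y" "sh ?m z" "sh ?m w"] algebra_simps)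
      done
  qed
qed

lemma mulv_adj: "bv (pfister_list cs) (mulv cs y v) w = bv (pfister_list cs) v (mulv cs y w)"
proof (induction cs arbitrary: y v w)
  case Nil then show ?case by (simp add: bv_def)
next
  case (Cons c cs)
  let ?m = "2 ^ length cs"
  note IH = Cons.IH
  show ?case
    apply (simp only: bv_pl_Cons bv_first bv_first2 sh_mulv bv_add1 bv_add2 bv_scale1 bv_scale2)
    apply (simp del: sh_apply add: IH[of y v w] IH[of "sh ?m y" "sh ?m v" w] IH[of "sh ?m y" v "sh ?m w"]
        IH[of y "sh ?m v" "sh ?m w"] algebra_simps)
    done
qed

lemma mulv_sq:
  assumes c2: "CHAR('a::field) = 2"
  shows "i < 2 ^ length cs \<Longrightarrow> mulv cs y (mulv cs y w) i = bv (pfister_list cs) y y * (w i :: 'a)"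
proof (induction cs arbitrary: y w i)
  case Nil then show ?case by (simp add: bv_def)
next
  case (Cons c cs)
  let ?m = "2 ^ length cs"
  note IH = Cons.IH
  have two: "(x::'a) + x = 0" for x using char2_add_self[OF c2] .
  show ?case
  proof (cases "i < ?m")
    case True
    have e: "mulv cs y (mulv (c # cs) y w) i + c * mulv cs (sh ?m y) (sh ?m (mulv (c # cs) y w)) i
      = mulv cs y (mulv cs y w) i + c * mulv cs (sh ?m y) (mulv cs (sh ?m y) w) i
        + (c * mulv cs y (mulv cs (sh ?m y) (sh ?m w)) i + c * mulv cs (sh ?m y) (mulv cs y (sh ?m w)) i)"
      by (simp only: mulv_first sh_mulv mulv_add mulv_scale) (simp del: sh_apply add: algebra_simps)
    have z: "c * mulv cs y (mulv cs (sh ?m y) (sh ?m w)) i + c * mulv cs (sh ?m y) (mulv cs y (sh ?m w)) i = 0"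
      by (simp only: mulv_comm[of cs "sh ?m y" y] two)
    have "mulv (c # cs) y (mulv (c # cs) y w) i = mulv cs y (mulv (c # cs) y w) i + c * mulv cs (sh ?m y) (sh ?m (mulv (c # cs) y w)) i"
      using True by (simp only: mulv.simps(2)[of c cs y "mulv (c # cs) y w"] if_True)
    also have "\<dots> = mulv cs y (mulv cs y w) i + c * mulv cs (sh ?m y) (mulv cs (sh ?m y) w) i"
      unfolding e z by simp
    also have "\<dots> = bv (pfister_list (c # cs)) y y * w i"
      by (simp only: IH[OF True] bv_pl_Cons) (simp del: sh_apply add: algebra_simps)
    finally show ?thesis .
  next
    case False
    then have j: "i - ?m < ?m" using Cons.prems by simp
    have e: "mulv cs (sh ?m y) (mulv (c # cs) y w) (i - ?m) + mulv cs y (sh ?m (mulv (c # cs) y w)) (i - ?m)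
      = c * mulv cs (sh ?m y) (mulv cs (sh ?m y) (sh ?m w)) (i - ?m) + mulv cs y (mulv cs y (sh ?m w)) (i - ?m)
        + (mulv cs (sh ?m y) (mulv cs y w) (i - ?m) + mulv cs y (mulv cs (sh ?m y) w) (i - ?m))"
      by (simp only: mulv_first sh_mulv mulv_add mulv_scale) (simp del: sh_apply add: algebra_simps)
    have z: "mulv cs (sh ?m y) (mulv cs y w) (i - ?m) + mulv cs y (mulv cs (sh ?m y) w) (i - ?m) = 0"
      by (simp only: mulv_comm[of cs "sh ?m y" y] two)
    have "mulv (c # cs) y (mulv (c # cs) y w) i = mulv cs (sh ?m y) (mulv (c # cs) y w) (i - ?m) + mulv cs y (sh ?m (mulv (c # cs) y w)) (i - ?m)"
      using False Cons.prems by (simp only: mulv.simps(2)[of c cs y "mulv (c # cs) y w"] if_False if_True length_Cons power_Suc)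
    also have "\<dots> = c * mulv cs (sh ?m y) (mulv cs (sh ?m y) (sh ?m w)) (i - ?m) + mulv cs y (mulv cs y (sh ?m w)) (i - ?m)"
      unfolding e z by simp
    also have "\<dots> = bv (pfister_list (c # cs)) y y * w i"
    proof -
      have wi: "sh ?m w (i - ?m) = w i" using False by simp
      show ?thesis by (simp only: IH[OF j] bv_pl_Cons wi) (simp del: sh_apply add: algebra_simps)
    qed
    finally show ?thesis .
  qed
qed

lemma mulv_S: "is_subfield S \<Longrightarrow> set cs \<subseteq> S \<Longrightarrow> vec_on S (2 ^ length cs) y \<Longrightarrow> vec_on S (2 ^ length cs) v
  \<Longrightarrow> mulv cs y v i \<in> S"
proof (induction cs arbitrary: y v i)
  case Nil then show ?case by (auto simp: vec_on_def sf_mult sf_0)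
next
  case (Cons c cs)
  let ?m = "2 ^ length cs"
  have y1: "vec_on S ?m y" "vec_on S ?m (sh ?m y)" and v1: "vec_on S ?m v" "vec_on S ?m (sh ?m v)"
    using Cons.prems by (auto simp: vec_on_def)
  have c: "c \<in> S" "set cs \<subseteq> S" using Cons.prems by auto
  note I = Cons.IH[OF Cons.prems(1) c(2)]
  show ?case
    using I[OF y1(1) v1(1)] I[OF y1(2) v1(2)] I[OF y1(2) v1(1)] I[OF y1(1) v1(2)] c Cons.prems(1)
    by (simp del: sh_apply add: sf_add sf_mult sf_0)
qed

lemma mulv_zero: "mulv cs y (\<lambda>i. 0) = (\<lambda>i. 0)"
  using mulv_scale[of cs y 0 "\<lambda>i. 0"] by simp

lemma mulv_sum: "mulv cs y (\<lambda>i. \<Sum>k\<in>A. f k i) = (\<lambda>i. \<Sum>k\<in>A. mulv cs y (f k) i)"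
proof (induction A rule: infinite_finite_induct)
  case (infinite A) then show ?case by (simp add: mulv_zero)
next
  case empty then show ?case by (simp add: mulv_zero)
next
  case (insert x F) then show ?case by (simp add: mulv_add)
qed

lemma mulv_mform: "mform (2 ^ length cs) (mulv cs y)"
  unfolding mform_def
proof (intro allI impI)
  fix v and i :: nat
  let ?m = "2 ^ length cs"
  assume i: "i < ?m"
  have "mulv cs y v = mulv cs y (\<lambda>j. \<Sum>k<?m. v k * unit k j)"
    by (rule mulv_cong) (auto simp: sum_unit_right2)
  also have "\<dots> = (\<lambda>j. \<Sum>k<?m. v k * mulv cs y (unit k) j)"
    by (simp add: mulv_sum mulv_scale)
  finally show "mulv cs y v i = (\<Sum>k<?m. v k * mulv cs y (unit k) i)" by simp
qed

lemma pl_S: "is_subfield S \<Longrightarrow> set as \<subseteq> S \<Longrightarrow> set (pfister_list as) \<subseteq> S"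
  by (induction as) (auto simp: sf_1 sf_mult)

lemma pl_nz: "set as \<subseteq> - {0} \<Longrightarrow> 0 \<notin> set (pfister_list (as :: 'a::field list))"
  by (induction as) auto

definition qv :: "'a::field set \<Rightarrow> 'a list \<Rightarrow> 'a set" where
  "qv S d = {bv d v v | v. vec_on S (length d) v}"

lemma bv_zero_vec: "\<not> nonzero_vec (length d) v \<Longrightarrow> bv d v v = 0"
  unfolding nonzero_vec_def bv_def by simp

lemma Q_on_qv: "is_subfield S \<Longrightarrow> Q_on S (length d) (diag_gram d) = qv S d"
proof -
  assume S: "is_subfield S"
  have "0 \<in> qv S d" unfolding qv_def
    by (rule CollectI, rule exI[of _ "\<lambda>i. 0"]) (auto simp: bv_def vec_on_def sf_0[OF S])
  then show ?thesis unfolding Q_on_def qv_def using bv_zero_vec by (auto simp: bval_diag)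
qed

lemma bv_S: "is_subfield S \<Longrightarrow> set d \<subseteq> S \<Longrightarrow> vec_on S (length d) v \<Longrightarrow> vec_on S (length d) w \<Longrightarrow> bv d v w \<in> S"
  unfolding bv_def vec_on_def by (auto intro!: sf_sum sf_mult)

lemma round:
  assumes c2: "CHAR('a::field) = 2" and S: "is_subfield S" and cs: "set cs \<subseteq> S"
    and x: "x \<in> qv S (pfister_list cs)" and x0: "(x::'a) \<noteq> 0"
  shows "diso S (map (\<lambda>z. x * z) (pfister_list cs)) (pfister_list cs)"
proof -
  let ?m = "2 ^ length cs"
  let ?d = "pfister_list cs"
  obtain y where y: "vec_on S ?m y" and xy: "x = bv ?d y y" using x unfolding qv_def by auto
  have xS: "x \<in> S" using bv_S[OF S pl_S[OF S cs]] y xy by simp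
  show ?thesis
  proof (rule diso_I[where f = "\<lambda>v i. inverse x * mulv cs y v i" and g = "mulv cs y"])
    show "length (map ((*) x) ?d) = length ?d" by simp
    show "mform (length (map ((*) x) ?d)) (\<lambda>v i. inverse x * mulv cs y v i)"
      using mulv_mform[of cs y] unfolding mform_def by (simp add: sum_distrib_left mult_ac)
    show "mform (length (map ((*) x) ?d)) (mulv cs y)" using mulv_mform by simp
    show "vec_on S (length (map ((*) x) ?d)) (\<lambda>i. inverse x * mulv cs y v i)"
      if "vec_on S (length (map ((*) x) ?d)) v" for v
      using that mulv_S[OF S cs y] sf_inverse[OF S xS] sf_mult[OF S] unfolding vec_on_def by simp
    show "vec_on S (length (map ((*) x) ?d)) (mulv cs y v)"
      if "vec_on S (length (map ((*) x) ?d)) v" for v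
      using that mulv_S[OF S cs y] unfolding vec_on_def by simp
    show "inverse x * mulv cs y (mulv cs y v) i = v i" if "i < length (map ((*) x) ?d)" for v i
      using that mulv_sq[OF c2, of i cs y v] xy x0 by simp
    show "bv (map ((*) x) ?d) (\<lambda>i. inverse x * mulv cs y v i) (\<lambda>i. inverse x * mulv cs y w i) = bv ?d v w" for v w
    proof -
      have "bv ?d v (mulv cs y (mulv cs y w)) = bv ?d v (\<lambda>i. x * w i)"
        by (rule bv_cong) (auto simp: mulv_sq[OF c2] xy)
      then have "bv ?d (mulv cs y v) (mulv cs y w) = x * bv ?d v w"
        by (simp add: mulv_adj bv_scale2)
      moreover have "bv (map ((*) x) ?d) (\<lambda>i. inverse x * mulv cs y v i) (\<lambda>i. inverse x * mulv cs y w i)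
          = x * (inverse x * (inverse x * bv ?d (mulv cs y v) (mulv cs y w)))"
        by (simp only: bv_map bv_scale1 bv_scale2 mult_ac)
      ultimately show ?thesis using x0 by (simp add: field_simps)
    qed
  qed
qed

lemma bv_sq: "bv d v v = (\<Sum>i<length d. (v i)^2 * d ! i)"
  unfolding bv_def by (simp add: power2_eq_square mult_ac)

lemma pl_nth0: "pfister_list as ! 0 = 1"
  by (induction as) (auto simp: nth_append)

lemma qvI: "vec_on S (length d) v \<Longrightarrow> bv d v v = x \<Longrightarrow> x \<in> qv S d"
  unfolding qv_def by auto

lemma qv_0: "is_subfield S \<Longrightarrow> 0 \<in> qv S d"
  unfolding qv_def by (rule CollectI, rule exI[of _ "\<lambda>i. 0"]) (auto simp: bv_def vec_on_def sf_0)

lemma qv_Cons: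
  assumes S: "is_subfield S"
  shows "qv S (pfister_list (a # xs)) = {u + a * w | u w. u \<in> qv S (pfister_list xs) \<and> w \<in> qv S (pfister_list xs)}"
proof -
  let ?m = "2 ^ length xs"
  let ?d = "pfister_list xs"
  show ?thesis
  proof (intro set_eqI iffI)
    fix z assume "z \<in> qv S (pfister_list (a # xs))"
    then obtain v where v: "vec_on S (length (pfister_list (a # xs))) v" and z: "z = bv (pfister_list (a # xs)) v v"
      unfolding qv_def by blast
    have "vec_on S ?m v" "vec_on S ?m (sh ?m v)" using v by (auto simp: vec_on_def)
    moreover have "z = bv ?d v v + a * bv ?d (sh ?m v) (sh ?m v)" using z by (simp only: bv_pl_Cons)
    ultimately show "z \<in> {u + a * w | u w. u \<in> qv S ?d \<and> w \<in> qv S ?d}"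
      by (blast intro: qvI[where d = ?d, simplified])
  next
    fix z assume "z \<in> {u + a * w | u w. u \<in> qv S ?d \<and> w \<in> qv S ?d}"
    then obtain v0 v1 where v0: "vec_on S ?m v0" and v1: "vec_on S ?m v1"
      and z: "z = bv ?d v0 v0 + a * bv ?d v1 v1" unfolding qv_def by auto
    define v where "v i = (if i < ?m then v0 i else v1 (i - ?m))" for i
    have "vec_on S (2 * ?m) v" using v0 v1 unfolding vec_on_def v_def by auto
    moreover have "bv ?d v v = bv ?d v0 v0" by (rule bv_cong) (auto simp: v_def)
    moreover have "sh ?m v = v1" by (auto simp: v_def fun_eq_iff)
    ultimately have "bv (pfister_list (a # xs)) v v = z" using z by (simp only: bv_pl_Cons)
    moreover have "vec_on S (length (pfister_list (a # xs))) v" using \<open>vec_on S (2 * ?m) v\<close> by (simp add: mult_2)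
    ultimately show "z \<in> qv S (pfister_list (a # xs))" by (intro qvI)
  qed
qed

lemma qv_add:
  assumes c2: "CHAR('a::field) = 2" and S: "is_subfield S"
    and "u \<in> qv S d" "w \<in> qv S (d :: 'a list)"
  shows "u + w \<in> qv S d"
proof -
  obtain v where v: "vec_on S (length d) v" "u = bv d v v" using assms(3) unfolding qv_def by auto
  obtain v' where v': "vec_on S (length d) v'" "w = bv d v' v'" using assms(4) unfolding qv_def by auto
  have "bv d (\<lambda>i. v i + v' i) (\<lambda>i. v i + v' i) = u + w"
    unfolding v v' bv_sq by (simp add: char2_sq_add[OF c2] sum.distrib algebra_simps)
  moreover have "vec_on S (length d) (\<lambda>i. v i + v' i)" using v v' S by (auto simp: vec_on_def sf_add)
  ultimately show ?thesis by (intro qvI)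
qed

lemma qv_mult:
  assumes c2: "CHAR('a::field) = 2" and S: "is_subfield S" and cs: "set cs \<subseteq> S"
    and "u \<in> qv S (pfister_list cs)" "w \<in> qv S (pfister_list (cs :: 'a list))"
  shows "u * w \<in> qv S (pfister_list cs)"
proof -
  let ?d = "pfister_list cs"
  obtain y where y: "vec_on S (2 ^ length cs) y" "u = bv ?d y y" using assms(4) unfolding qv_def by auto
  obtain v where v: "vec_on S (2 ^ length cs) v" "w = bv ?d v v" using assms(5) unfolding qv_def by auto
  have "bv ?d v (mulv cs y (mulv cs y v)) = bv ?d v (\<lambda>i. u * v i)"
    by (rule bv_cong) (auto simp: mulv_sq[OF c2] y)
  then have "bv ?d (mulv cs y v) (mulv cs y v) = u * w" by (simp add: mulv_adj bv_scale2 v)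
  moreover have "vec_on S (2 ^ length cs) (mulv cs y v)"
    using mulv_S[OF S cs y(1) v(1)] by (simp add: vec_on_def)
  ultimately show ?thesis by (intro qvI) auto
qed

lemma qv_sq:
  assumes S: "is_subfield S" and t: "t \<in> S"
  shows "t^2 \<in> qv S (pfister_list cs)"
proof -
  have u: "bv (pfister_list cs) (unit 0) (unit 0) = 1"
    unfolding bv_def by (simp only: mult.assoc) (subst sum_unit_left, simp_all add: pl_nth0 unit_def)
  have "bv (pfister_list cs) (\<lambda>i. t * unit 0 i) (\<lambda>i. t * unit 0 i) = t^2"
    by (simp only: bv_scale1 bv_scale2 u) (simp add: power2_eq_square)
  moreover have "vec_on S (2 ^ length cs) (\<lambda>i. t * unit 0 i)"
    using vec_on_unit[OF S, of _ 0] t sf_mult[OF S] by (auto simp: vec_on_def)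
  ultimately show ?thesis by (intro qvI) auto
qed

lemma qv_inverse:
  assumes c2: "CHAR('a::field) = 2" and S: "is_subfield S" and cs: "set cs \<subseteq> S"
    and u: "u \<in> qv S (pfister_list (cs :: 'a list))"
  shows "inverse u \<in> qv S (pfister_list cs)"
proof (cases "u = 0")
  case True then show ?thesis using qv_0[OF S] by simp
next
  case False
  have uS: "u \<in> S" using u bv_S[OF S pl_S[OF S cs]] unfolding qv_def by auto
  have "inverse u = (inverse u)^2 * u" using False by (simp add: power2_eq_square)
  then show ?thesis using qv_mult[OF c2 S cs qv_sq[OF S sf_inverse[OF S uS]] u] by simp
qed

definition anis :: "'a::field set \<Rightarrow> 'a list \<Rightarrow> bool" where
  "anis S d \<longleftrightarrow> (\<forall>v. vec_on S (length d) v \<and> nonzero_vec (length d) v \<longrightarrow> bv d v v \<noteq> 0)"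

lemma anis_iff: "anisotropic_on S (2 ^ length xs) (pf_gram xs) \<longleftrightarrow> anis S (pfister_list xs)"
  unfolding anisotropic_on_def anis_def pf_gram_def using bval_diag[of "pfister_list xs"] by simp

lemma anis_Cons:
  assumes c2: "CHAR('a::field) = 2" and S: "is_subfield S" and xs: "set xs \<subseteq> S"
    and an: "anis S (pfister_list xs)" and a: "a \<notin> qv S (pfister_list (xs :: 'a list))"
  shows "anis S (pfister_list (a # xs))"
  unfolding anis_def
proof (intro allI impI, elim conjE)
  let ?m = "2 ^ length xs"
  let ?d = "pfister_list xs"
  fix v assume v: "vec_on S (length (pfister_list (a # xs))) v" and nz: "nonzero_vec (length (pfister_list (a # xs))) v"
  have v0: "vec_on S ?m v" and v1: "vec_on S ?m (sh ?m v)" using v by (auto simp: vec_on_def)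
  show "bv (pfister_list (a # xs)) v v \<noteq> 0"
  proof
    assume z: "bv (pfister_list (a # xs)) v v = 0"
    then have z': "bv ?d v v + a * bv ?d (sh ?m v) (sh ?m v) = 0" by (simp only: bv_pl_Cons)
    show False
    proof (cases "nonzero_vec ?m (sh ?m v)")
      case True
      then have q: "bv ?d (sh ?m v) (sh ?m v) \<noteq> 0" using an v1 unfolding anis_def by simp
      have "a = bv ?d v v * inverse (bv ?d (sh ?m v) (sh ?m v))"
      proof -
        have "bv ?d v v = - (a * bv ?d (sh ?m v) (sh ?m v))" using z' by (simp add: eq_neg_iff_add_eq_0)
        then have "bv ?d v v = a * bv ?d (sh ?m v) (sh ?m v)" using char2_minus[OF c2] by metis
        then show ?thesis using q by (simp add: field_simps)
      qed
      moreover have "bv ?d v v \<in> qv S ?d" using v0 unfolding qv_def by auto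
      moreover have "bv ?d (sh ?m v) (sh ?m v) \<in> qv S ?d" using v1 unfolding qv_def by auto
      ultimately have "a \<in> qv S ?d" using qv_mult[OF c2 S xs] qv_inverse[OF c2 S xs] by simp
      then show False using a by simp
    next
      case False
      then have "bv ?d (sh ?m v) (sh ?m v) = 0" using bv_zero_vec[of ?d] by simp
      then have "bv ?d v v = 0" using z' by simp
      moreover have "nonzero_vec ?m v"
      proof -
        obtain i where i: "i < 2 * ?m" "v i \<noteq> 0" using nz unfolding nonzero_vec_def by (auto simp: mult_2)
        have "i < ?m"
        proof (rule ccontr)
          assume "\<not> i < ?m"
          then have "i - ?m < ?m" "sh ?m v (i - ?m) = v i" using i by auto
          then show False using False i unfolding nonzero_vec_def by metis
        qed
        then show ?thesis using i unfolding nonzero_vec_def by auto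
      qed
      ultimately show False using an v0 unfolding anis_def by simp
    qed
  qed
qed

lemma qv_one:
  assumes c2: "CHAR('a::field) = 2" and S: "is_subfield S"
  shows "qv S (pfister_list (1 # xs)) = qv S (pfister_list (xs :: 'a list))"
proof -
  have "qv S (pfister_list (1 # xs)) = {u + 1 * w | u w. u \<in> qv S (pfister_list xs) \<and> w \<in> qv S (pfister_list xs)}"
    by (rule qv_Cons[OF S])
  also have "\<dots> = qv S (pfister_list xs)"
  proof (intro set_eqI iffI)
    fix z assume "z \<in> {u + 1 * w | u w. u \<in> qv S (pfister_list xs) \<and> w \<in> qv S (pfister_list xs)}"
    then show "z \<in> qv S (pfister_list xs)" using qv_add[OF c2 S] by auto
  next
    fix z assume "z \<in> qv S (pfister_list xs)"
    then show "z \<in> {u + 1 * w | u w. u \<in> qv S (pfister_list xs) \<and> w \<in> qv S (pfister_list xs)}"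
      using qv_0[OF S] by force
  qed
  finally show ?thesis .
qed

lemma qv_rep:
  assumes c2: "CHAR('a::field) = 2" and S: "is_subfield S"
  shows "qv S (pfister_list (replicate r 1 @ bs)) = qv S (pfister_list (bs :: 'a list))"
proof (induction r)
  case (Suc r)
  have "qv S (pfister_list (replicate (Suc r) 1 @ bs)) = qv S (pfister_list (1 # (replicate r 1 @ bs)))"
    by (simp only: replicate_Suc append_Cons)
  then show ?case using qv_one[OF c2 S] Suc by simp
qed simp

lemma anis_Nil: fixes S :: "'a::field set" shows "anis S (pfister_list [])"
proof -
  have "bv [1] v v = v 0 * v 0" for v :: "nat \<Rightarrow> 'a" by (simp add: bv_def)
  then show ?thesis unfolding anis_def nonzero_vec_def by auto
qed

lemma exist:
  assumes c2: "CHAR('a::field) = 2" and S: "is_subfield S"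
  shows "set as \<subseteq> S - {0} \<Longrightarrow> \<exists>r bs. set bs \<subseteq> S - {0} \<and> r + length bs = length as \<and> anis S (pfister_list bs)
     \<and> diso S (pfister_list as) (pfister_list (replicate r 1 @ (bs :: 'a list)))"
proof (induction as)
  case Nil
  show ?case by (rule exI[of _ 0], rule exI[of _ "[]"]) (simp add: anis_Nil[simplified] diso_refl[OF S])
next
  case (Cons a as)
  obtain r bs where bs: "set bs \<subseteq> S - {0}" and l: "r + length bs = length as" and an: "anis S (pfister_list bs)"
    and d: "diso S (pfister_list as) (pfister_list (replicate r 1 @ bs))"
    using Cons by auto
  have aS: "a \<in> S" "a \<noteq> 0" using Cons.prems by auto
  have d1: "diso S (pfister_list (a # as)) (pfister_list (a # replicate r 1 @ bs))"
    using diso_pl_Cons[OF d] .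
  show ?case
  proof (cases "a \<in> qv S (pfister_list bs)")
    case True
    let ?D = "pfister_list (replicate r 1 @ bs)"
    have csS: "set (replicate r 1 @ bs) \<subseteq> S" using bs sf_1[OF S] by auto
    have "a \<in> qv S ?D" using True qv_rep[OF c2 S] by simp
    then have "diso S (map (\<lambda>z. a * z) ?D) ?D" using round[OF c2 S csS _ aS(2)] by simp
    then have "diso S (?D @ map (\<lambda>z. a * z) ?D) (?D @ ?D)" using diso_append diso_refl[OF S] by blast
    moreover have "map ((*) 1) ?D = ?D" by (rule map_idI) simp
    ultimately have "diso S (pfister_list (a # replicate r 1 @ bs)) (pfister_list (replicate (Suc r) 1 @ bs))"
      by simp
    then show ?thesis using d1 diso_trans bs an l by (intro exI[of _ "Suc r"] exI[of _ bs]) auto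
  next
    case False
    have "diso S (pfister_list (a # replicate r 1 @ bs)) (pfister_list (replicate r 1 @ a # bs))"
      using diso_perm[OF S pm_move] .
    moreover have "anis S (pfister_list (a # bs))"
      using anis_Cons[OF c2 S _ an False] bs by auto
    ultimately show ?thesis using d1 diso_trans bs l aS by (intro exI[of _ r] exI[of _ "a # bs"]) auto
  qed
qed


lemma sum_skip:
  fixes f :: "nat \<Rightarrow> 'a::comm_monoid_add"
  assumes p: "p < Suc n"
  shows "(\<Sum>k<Suc n. f k) = f p + (\<Sum>i<n. f (if i < p then i else Suc i))"
proof -
  define \<sigma> where "\<sigma> i = (if i < p then i else Suc i)" for i
  have inj: "inj_on \<sigma> {..<n}" unfolding inj_on_def \<sigma>_def by auto
  have img: "{..<Suc n} = insert p (\<sigma> ` {..<n})"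
  proof (intro set_eqI iffI)
    fix k assume k: "k \<in> {..<Suc n}"
    show "k \<in> insert p (\<sigma> ` {..<n})"
    proof (cases "k < p")
      case True then show ?thesis using p by (auto simp: \<sigma>_def image_iff intro!: bexI[of _ k])
    next
      case False
      then show ?thesis
      proof (cases "k = p")
        case False
        then have "k = \<sigma> (k - 1)" "k - 1 < n" using \<open>\<not> k < p\<close> k by (auto simp: \<sigma>_def)
        then show ?thesis by blast
      qed simp
    qed
  next
    fix k assume "k \<in> insert p (\<sigma> ` {..<n})"
    then show "k \<in> {..<Suc n}" using p by (auto simp: \<sigma>_def)
  qed
  have np: "p \<notin> \<sigma> ` {..<n}" by (auto simp: \<sigma>_def)
  have "(\<Sum>k<Suc n. f k) = f p + sum f (\<sigma> ` {..<n})" unfolding img using np by simp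
  also have "sum f (\<sigma> ` {..<n}) = (\<Sum>i<n. f (\<sigma> i))" using sum.reindex[OF inj] by simp
  finally show ?thesis unfolding \<sigma>_def .
qed

lemma indep_le:
  assumes S: "is_subfield S"
  shows "\<And>N us. (\<forall>i<N. vec_on S M (us i)) \<Longrightarrow>
    (\<forall>c. vec_on S N c \<and> (\<forall>j<M. (\<Sum>i<N. c i * us i j) = (0::'a::field)) \<longrightarrow> (\<forall>i<N. c i = 0)) \<Longrightarrow> N \<le> M"
proof (induction M)
  case 0
  show ?case
  proof (rule ccontr)
    assume "\<not> N \<le> 0"
    then have "0 < N" by simp
    have "vec_on S N (\<lambda>i. 1)" using sf_1[OF S] by (simp add: vec_on_def)
    then show False using 0(2) \<open>0 < N\<close> by auto
  qed
next
  case (Suc M N us)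
  show ?case
  proof (cases "\<forall>i<N. us i M = 0")
    case True
    have "\<forall>i<N. vec_on S M (us i)" using Suc.prems(1) by (auto simp: vec_on_def)
    moreover have "\<forall>c. vec_on S N c \<and> (\<forall>j<M. (\<Sum>i<N. c i * us i j) = 0) \<longrightarrow> (\<forall>i<N. c i = 0)"
    proof (rule allI, rule impI, elim conjE)
      fix c assume c: "vec_on S N c" and z: "\<forall>j<M. (\<Sum>i<N. c i * us i j) = 0"
      have "\<forall>j<Suc M. (\<Sum>i<N. c i * us i j) = 0"
        using z True by (auto simp: less_Suc_eq)
      then show "\<forall>i<N. c i = 0" using Suc.prems(2) c by blast
    qed
    ultimately have "N \<le> M" by (rule Suc.IH)
    then show ?thesis by simp
  next
    case False
    then obtain p where p: "p < N" "us p M \<noteq> 0" by auto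
    then obtain N' where N: "N = Suc N'" by (cases N) auto
    define \<sigma> where "\<sigma> i = (if i < p then i else Suc i)" for i
    have \<sigma>N: "\<sigma> i < N" if "i < N'" for i using that p N by (auto simp: \<sigma>_def)
    define r where "r i = us (\<sigma> i) M / us p M" for i
    define vs where "vs i j = us (\<sigma> i) j - r i * us p j" for i j
    have usS: "us i j \<in> S" if "i < N" "j < Suc M" for i j using Suc.prems(1) that by (auto simp: vec_on_def)
    have rS: "r i \<in> S" if "i < N'" for i using that \<sigma>N p usS unfolding r_def by (auto intro!: sf_divide[OF S])
    have vsS: "\<forall>i<N'. vec_on S M (vs i)"
      using \<sigma>N p usS rS unfolding vs_def vec_on_def by (auto intro!: sf_diff[OF S] sf_mult[OF S])
    have "\<forall>c. vec_on S N' c \<and> (\<forall>j<M. (\<Sum>i<N'. c i * vs i j) = 0) \<longrightarrow> (\<forall>i<N'. c i = 0)"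
    proof (rule allI, rule impI, elim conjE)
      fix c assume c: "vec_on S N' c" and z: "\<forall>j<M. (\<Sum>i<N'. c i * vs i j) = 0"
      define c' where "c' k = (if k = p then - (\<Sum>i<N'. c i * r i) else if k < p then c k else c (k - 1))" for k
      have c'\<sigma>: "c' (\<sigma> i) = c i" for i unfolding c'_def \<sigma>_def by auto
      have c'S: "vec_on S N c'"
        unfolding vec_on_def
      proof (intro allI impI)
        fix k assume k: "k < N"
        have s: "(\<Sum>i<N'. c i * r i) \<in> S"
          using c rS by (auto simp: vec_on_def intro!: sf_sum[OF S] sf_mult[OF S])
        show "c' k \<in> S"
        proof (cases "k = p")
          case True then show ?thesis using s sf_uminus[OF S] by (simp add: c'_def)
        next
          case False
          then show ?thesis using c k N p unfolding c'_def vec_on_def by auto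
        qed
      qed
      have sums: "(\<Sum>k<N. c' k * us k j) = (\<Sum>i<N'. c i * vs i j)" for j
      proof -
        have "(\<Sum>k<N. c' k * us k j) = c' p * us p j + (\<Sum>i<N'. c' (\<sigma> i) * us (\<sigma> i) j)"
          unfolding N \<sigma>_def by (rule sum_skip) (use p N in simp)
        also have "\<dots> = (\<Sum>i<N'. c i * vs i j)"
        proof -
          have "c' p * us p j = - (\<Sum>i<N'. c i * r i * us p j)"
            by (simp add: c'_def sum_distrib_right)
          moreover have "(\<Sum>i<N'. c i * vs i j) = (\<Sum>i<N'. c i * us (\<sigma> i) j) - (\<Sum>i<N'. c i * r i * us p j)"
            unfolding vs_def by (simp add: right_diff_distrib sum_subtractf mult.assoc)
          ultimately show ?thesis unfolding c'\<sigma> by simp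
        qed
        finally show ?thesis .
      qed
      have vsM: "vs i M = 0" for i unfolding vs_def r_def using p by simp
      have "\<forall>j<Suc M. (\<Sum>k<N. c' k * us k j) = 0"
        using z vsM by (auto simp: sums less_Suc_eq)
      then have "\<forall>k<N. c' k = 0" using Suc.prems(2) c'S by blast
      then show "\<forall>i<N'. c i = 0" using \<sigma>N c'\<sigma> by (metis (no_types))
    qed
    then have "N' \<le> M" using Suc.IH[OF vsS] by blast
    then show ?thesis using N by simp
  qed
qed

lemma bv_unit: "i < length d \<Longrightarrow> bv d (unit i) (unit i) = d ! i"
  unfolding bv_def by (simp only: mult.assoc) (subst sum_unit_left, simp_all add: unit_def)

lemma dim:
  assumes c2: "CHAR('a::field) = 2" and S: "is_subfield S" and an: "anis S d"
    and sub: "qv S d \<subseteq> qv S (d' :: 'a list)"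
  shows "length d \<le> length d'"
proof -
  let ?N = "length d" and ?M = "length d'"
  have ex: "\<exists>w. vec_on S ?M w \<and> bv d' w w = d ! i" if "i < ?N" for i
  proof -
    have "d ! i \<in> qv S d" using bv_unit[OF that] vec_on_unit[OF S] by (intro qvI) auto
    then have "d ! i \<in> qv S d'" using sub by blast
    then show ?thesis unfolding qv_def by force
  qed
  define u where "u i = (SOME w. vec_on S ?M w \<and> bv d' w w = d ! i)" for i
  have u: "vec_on S ?M (u i) \<and> bv d' (u i) (u i) = d ! i" if "i < ?N" for i
    unfolding u_def using someI_ex[OF ex[OF that]] .
  have "?N \<le> ?M"
  proof (rule indep_le[OF S])
    show "\<forall>i<?N. vec_on S ?M (u i)" using u by blast
    show "\<forall>c. vec_on S ?N c \<and> (\<forall>j<?M. (\<Sum>i<?N. c i * u i j) = 0) \<longrightarrow> (\<forall>i<?N. c i = 0)"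
    proof (rule allI, rule impI, elim conjE)
      fix c assume c: "vec_on S ?N c" and z: "\<forall>j<?M. (\<Sum>i<?N. c i * u i j) = 0"
      define W where "W j = (\<Sum>i<?N. c i * u i j)" for j
      have "bv d' W W = 0" using z unfolding W_def by (simp add: bv_def)
      moreover have "bv d' W W = bv d c c"
      proof -
        have "bv d' W W = (\<Sum>j<?M. (\<Sum>i<?N. (c i * u i j)^2) * d' ! j)"
          unfolding bv_sq W_def by (rule sum.cong[OF refl], subst char2_sum_sq[OF c2], rule refl)
        also have "\<dots> = (\<Sum>i<?N. (c i)^2 * (\<Sum>j<?M. (u i j)^2 * d' ! j))"
          apply (simp add: sum_distrib_left sum_distrib_right power_mult_distrib)
          apply (subst sum.swap)
          apply (simp add: mult_ac)
          done
        also have "\<dots> = (\<Sum>i<?N. (c i)^2 * d ! i)"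
          using u by (auto simp: bv_sq[symmetric] intro!: sum.cong)
        also have "\<dots> = bv d c c" by (simp add: bv_sq)
        finally show ?thesis .
      qed
      ultimately have "bv d c c = 0" by simp
      then have "\<not> nonzero_vec ?N c" using an c unfolding anis_def by blast
      then show "\<forall>i<?N. c i = 0" unfolding nonzero_vec_def by blast
    qed
  qed
  then show ?thesis .
qed

lemma Q_on_all: "is_subfield S \<Longrightarrow> Q_on S m G = {bval m G v v | v. vec_on S m v}"
proof -
  assume S: "is_subfield S"
  have z: "bval m G v v = 0" if "\<not> nonzero_vec m v" for v
    using that unfolding nonzero_vec_def bval_def by simp
  have "0 \<in> {bval m G v v | v. vec_on S m v}"
    using z[of "\<lambda>i. 0"] sf_0[OF S] by (force simp: vec_on_def nonzero_vec_def)
  then show ?thesis unfolding Q_on_def using z by auto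
qed

lemma Q_iso:
  assumes S: "is_subfield S" and I: "iso_on S m G H"
  shows "Q_on S m G = Q_on S m H"
proof -
  obtain f g where f: "mform m f" and g: "mform m g" and fS: "\<forall>v. vec_on S m v \<longrightarrow> vec_on S m (f v)"
    and gS: "\<forall>v. vec_on S m v \<longrightarrow> vec_on S m (g v)" and fg: "\<forall>v i. i < m \<longrightarrow> f (g v) i = v i"
    and b: "\<forall>v w. bval m G (f v) (f w) = bval m H v w"
    using iso_miso[OF S I] unfolding miso_def by blast
  have "{bval m G v v | v. vec_on S m v} = {bval m H v v | v. vec_on S m v}"
  proof (intro set_eqI iffI)
    fix z assume "z \<in> {bval m G v v | v. vec_on S m v}"
    then obtain u where u: "vec_on S m u" "z = bval m G u u" by auto
    have "bval m G u u = bval m G (f (g u)) (f (g u))" by (rule bval_cong) (use fg in auto)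
    then have "z = bval m H (g u) (g u)" using u b by simp
    then show "z \<in> {bval m H v v | v. vec_on S m v}" using gS u by auto
  next
    fix z assume "z \<in> {bval m H v v | v. vec_on S m v}"
    then obtain u where u: "vec_on S m u" "z = bval m H u u" by auto
    then have "z = bval m G (f u) (f u)" using b by simp
    then show "z \<in> {bval m G v v | v. vec_on S m v}" using fS u by auto
  qed
  then show ?thesis using Q_on_all[OF S] by simp
qed

lemma diso_iso: "is_subfield S \<Longrightarrow> diso S (pfister_list as) (pfister_list bs) \<Longrightarrow>
  iso_on S (2 ^ length as) (pf_gram as) (pf_gram bs)"
  unfolding diso_def pf_gram_def using miso_iso by fastforce

lemma Q_pf: "is_subfield S \<Longrightarrow> Q_on S (2 ^ length as) (pf_gram as) = qv S (pfister_list as)"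
  using Q_on_qv[of S "pfister_list as"] by (simp add: pf_gram_def)

lemma pf_index_eq:
  assumes c2: "CHAR('a::field) = 2" and S: "is_subfield S"
    and bs: "set bs \<subseteq> S - {0}" and l: "r + length bs = length as"
    and an: "anis S (pfister_list bs)" and d: "diso S (pfister_list as) (pfister_list (replicate r 1 @ (bs :: 'a list)))"
  shows "pf_index S as = r"
  unfolding pf_index_def
proof (rule the_equality)
  have "iso_on S (2 ^ length as) (pf_gram as) (pf_gram (replicate r 1 @ bs))"
    using diso_iso[OF S d] .
  then show "\<exists>bs. set bs \<subseteq> S - {0} \<and> r + length bs = length as \<and>
      anisotropic_on S (2 ^ length bs) (pf_gram bs) \<and>
      iso_on S (2 ^ length as) (pf_gram as) (pf_gram (replicate r 1 @ bs))"
    using bs l an anis_iff by blast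
next
  fix r' assume "\<exists>bs. set bs \<subseteq> S - {0} \<and> r' + length bs = length as \<and>
      anisotropic_on S (2 ^ length bs) (pf_gram bs) \<and>
      iso_on S (2 ^ length as) (pf_gram as) (pf_gram (replicate r' 1 @ bs))"
  then obtain bs' where l': "r' + length bs' = length as" and an': "anis S (pfister_list bs')"
    and i': "iso_on S (2 ^ length as) (pf_gram as) (pf_gram (replicate r' 1 @ bs'))"
    using anis_iff by blast
  have "qv S (pfister_list bs') = Q_on S (2 ^ length as) (pf_gram as)"
    using Q_iso[OF S i'] Q_pf[OF S, of "replicate r' 1 @ bs'"] l' qv_rep[OF c2 S] by simp
  moreover have "qv S (pfister_list bs) = Q_on S (2 ^ length as) (pf_gram as)"
    using Q_iso[OF S diso_iso[OF S d]] Q_pf[OF S, of "replicate r 1 @ bs"] l qv_rep[OF c2 S] by simp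
  ultimately have e: "qv S (pfister_list bs) = qv S (pfister_list bs')" by simp
  have "length (pfister_list bs) \<le> length (pfister_list bs')" by (rule dim[OF c2 S an]) (simp add: e)
  moreover have "length (pfister_list bs') \<le> length (pfister_list bs)" by (rule dim[OF c2 S an']) (simp add: e)
  ultimately have "length bs = length bs'" by simp
  then show "r' = r" using l l' by simp
qed


lemma adjoin_char:
  assumes c2: "CHAR('a::field) = 2" and F: "is_subfield F" and a: "\<alpha> \<in> F" and s: "s ^ 2 = (\<alpha>::'a)"
  shows "is_subfield {x + y * s | x y. x \<in> F \<and> y \<in> F}"
    and "adjoin F s = {x + y * s | x y. x \<in> F \<and> y \<in> F}"
proof -
  let ?T = "{x + y * s | x y. x \<in> F \<and> y \<in> F}"
  have ss: "s * s = \<alpha>" using s by (simp add: power2_eq_square)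
  have T0: "0 \<in> ?T" using sf_0[OF F] by force
  have T1: "1 \<in> ?T" using sf_0[OF F] sf_1[OF F] by force
  have Tadd: "z + z' \<in> ?T" if hz: "z \<in> ?T" "z' \<in> ?T" for z z'
  proof -
    obtain x y x' y' where "x \<in> F" "y \<in> F" "x' \<in> F" "y' \<in> F" "z = x + y * s" "z' = x' + y' * s"
      using hz by blast
    then show ?thesis
      by (intro CollectI exI[of _ "x + x'"] exI[of _ "y + y'"]) (auto simp: sf_add[OF F] algebra_simps)
  qed
  have Tmult: "z * z' \<in> ?T" if hz: "z \<in> ?T" "z' \<in> ?T" for z z'
  proof -
    obtain x y x' y' where xy: "x \<in> F" "y \<in> F" "x' \<in> F" "y' \<in> F" "z = x + y * s" "z' = x' + y' * s"
      using hz by blast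
    have "z * z' = (x * x' + y * y' * \<alpha>) + (x * y' + y * x') * s"
      unfolding xy(5,6) ss[symmetric] by (simp add: algebra_simps)
    then show ?thesis using xy a
      by (intro CollectI exI[of _ "x * x' + y * y' * \<alpha>"] exI[of _ "x * y' + y * x'"])
        (auto simp: sf_add[OF F] sf_mult[OF F])
  qed
  have Tminus: "- z \<in> ?T" if hz: "z \<in> ?T" for z
  proof -
    obtain x y where "x \<in> F" "y \<in> F" "z = x + y * s" using hz by blast
    then show ?thesis
      by (intro CollectI exI[of _ "- x"] exI[of _ "- y"]) (auto simp: sf_uminus[OF F] algebra_simps)
  qed
  have Tinv: "inverse z \<in> ?T" if hz: "z \<in> ?T" "z \<noteq> 0" for z
  proof -
    obtain x y where xy: "x \<in> F" "y \<in> F" "z = x + y * s" using hz by blast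
    have N: "z * z = x * x + y * y * \<alpha>"
      using char2_sq_add[OF c2, of x "y * s"] unfolding xy(3) power2_eq_square ss[symmetric]
      by (simp add: algebra_simps)
    have NF: "x * x + y * y * \<alpha> \<in> F" using xy a by (auto simp: sf_add[OF F] sf_mult[OF F])
    have "inverse z = z * inverse (z * z)" using hz(2) by (simp add: field_simps)
    also have "\<dots> = x * inverse (x * x + y * y * \<alpha>) + (y * inverse (x * x + y * y * \<alpha>)) * s"
      unfolding N by (simp add: xy(3) algebra_simps)
    finally show ?thesis using xy NF
      by (intro CollectI exI[of _ "x * inverse (x * x + y * y * \<alpha>)"] exI[of _ "y * inverse (x * x + y * y * \<alpha>)"])
        (auto simp: sf_mult[OF F] sf_inverse[OF F])
  qed
  show T: "is_subfield ?T" unfolding is_subfield_def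
  proof (intro conjI ballI impI)
    show "0 \<in> ?T" by (rule T0)
    show "1 \<in> ?T" by (rule T1)
  next
    fix x y assume "x \<in> ?T" "y \<in> ?T"
    then show "x + y \<in> ?T" by (rule Tadd)
  next
    fix x y assume "x \<in> ?T" "y \<in> ?T"
    then show "x * y \<in> ?T" by (rule Tmult)
  next
    fix x assume "x \<in> ?T"
    then show "- x \<in> ?T" by (rule Tminus)
  next
    fix x assume "x \<in> ?T" "x \<noteq> 0"
    then show "inverse x \<in> ?T" by (rule Tinv)
  qed
  have FT: "F \<subseteq> ?T" using sf_0[OF F] by force
  have sT: "s \<in> ?T" using sf_0[OF F] sf_1[OF F] by force
  have TT: "?T \<subseteq> T'" if h: "is_subfield T'" "F \<subseteq> T'" "s \<in> T'" for T'
  proof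
    fix z assume "z \<in> ?T"
    then obtain x y where "x \<in> F" "y \<in> F" "z = x + y * s" by blast
    then show "z \<in> T'" using h sf_add[OF h(1)] sf_mult[OF h(1)] by blast
  qed
  show "adjoin F s = ?T" unfolding adjoin_def
  proof (rule antisym)
    show "\<Inter> {T. is_subfield T \<and> F \<subseteq> T \<and> s \<in> T} \<subseteq> ?T" using T FT sT by (intro Inter_lower) simp
    show "?T \<subseteq> \<Inter> {T. is_subfield T \<and> F \<subseteq> T \<and> s \<in> T}" using TT by (intro Inter_greatest) simp
  qed
qed

lemma bv_ext_sq:
  assumes c2: "CHAR('a::field) = 2" and s: "s ^ 2 = (\<alpha>::'a)"
  shows "bv d (\<lambda>i. x i + y i * s) (\<lambda>i. x i + y i * s) = bv d x x + \<alpha> * bv d y y"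
  unfolding bv_sq
  by (simp add: char2_sq_add[OF c2] power_mult_distrib s sum.distrib sum_distrib_left algebra_simps)

lemma qv_ext:
  assumes c2: "CHAR('a::field) = 2" and F: "is_subfield F" and a: "\<alpha> \<in> F" and s: "s ^ 2 = (\<alpha>::'a)"
  shows "qv (adjoin F s) d = {u + \<alpha> * w | u w. u \<in> qv F d \<and> w \<in> qv F d}"
proof (intro set_eqI iffI)
  let ?m = "length d"
  have K: "adjoin F s = {x + y * s | x y. x \<in> F \<and> y \<in> F}" using adjoin_char[OF c2 F a s] by blast
  fix z assume "z \<in> qv (adjoin F s) d"
  then obtain v where v: "vec_on (adjoin F s) ?m v" and z: "z = bv d v v" unfolding qv_def by blast
  have "\<forall>i\<in>{..<?m}. \<exists>p. fst p \<in> F \<and> snd p \<in> F \<and> v i = fst p + snd p * s"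
    using v unfolding vec_on_def K by force
  then obtain P where P: "\<forall>i\<in>{..<?m}. fst (P i) \<in> F \<and> snd (P i) \<in> F \<and> v i = fst (P i) + snd (P i) * s"
    by (metis bchoice)
  have "bv d v v = bv d (\<lambda>i. fst (P i) + snd (P i) * s) (\<lambda>i. fst (P i) + snd (P i) * s)"
    by (rule bv_cong) (use P in auto)
  also have "\<dots> = bv d (\<lambda>i. fst (P i)) (\<lambda>i. fst (P i)) + \<alpha> * bv d (\<lambda>i. snd (P i)) (\<lambda>i. snd (P i))"
    by (rule bv_ext_sq[OF c2 s])
  finally have "z = bv d (\<lambda>i. fst (P i)) (\<lambda>i. fst (P i)) + \<alpha> * bv d (\<lambda>i. snd (P i)) (\<lambda>i. snd (P i))"
    using z by simp
  moreover have "vec_on F ?m (\<lambda>i. fst (P i))" "vec_on F ?m (\<lambda>i. snd (P i))"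
    using P unfolding vec_on_def by auto
  ultimately show "z \<in> {u + \<alpha> * w | u w. u \<in> qv F d \<and> w \<in> qv F d}"
    by (blast intro: qvI)
next
  let ?m = "length d"
  have K: "adjoin F s = {x + y * s | x y. x \<in> F \<and> y \<in> F}" using adjoin_char[OF c2 F a s] by blast
  fix z assume "z \<in> {u + \<alpha> * w | u w. u \<in> qv F d \<and> w \<in> qv F d}"
  then obtain x y where x: "vec_on F ?m x" and y: "vec_on F ?m y" and z: "z = bv d x x + \<alpha> * bv d y y"
    unfolding qv_def by blast
  have "vec_on (adjoin F s) ?m (\<lambda>i. x i + y i * s)" using x y unfolding vec_on_def K by blast
  moreover have "bv d (\<lambda>i. x i + y i * s) (\<lambda>i. x i + y i * s) = z" using bv_ext_sq[OF c2 s] z by simp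
  ultimately show "z \<in> qv (adjoin F s) d" by (rule qvI)
qed

theorem lemma4p11:
  fixes F :: "'a::field set" and as :: "'a list" and \<alpha> s :: 'a
  assumes "CHAR('a) = 2"
    and "is_subfield F"
    and "set as \<subseteq> F - {0}"
    and "\<alpha> \<in> Q_on F (2 ^ length as) (pf_gram as)"
    and "\<alpha> \<notin> {x ^ 2 | x. x \<in> F}"
    and "s ^ 2 = \<alpha>"
  shows "pf_index (adjoin F s) as = pf_index F as + 1"
proof -
  note c2 = assms(1) and F = assms(2) and as = assms(3) and s = assms(6)
  let ?K = "adjoin F s"
  have asF: "set as \<subseteq> F" using as by auto
  have aQ: "\<alpha> \<in> qv F (pfister_list as)" using assms(4) Q_pf[OF F] by simp
  have aF: "\<alpha> \<in> F" using aQ bv_S[OF F pl_S[OF F asF]] unfolding qv_def by auto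
  have K: "?K = {x + y * s | x y. x \<in> F \<and> y \<in> F}" and Ksf: "is_subfield ?K"
    using adjoin_char[OF c2 F aF s] by auto
  have FK: "F \<subseteq> ?K" unfolding K using sf_0[OF F] by force
  have sF: "s \<notin> F" using assms(5) s by blast
  have asK: "set as \<subseteq> ?K - {0}" using as FK by auto
  obtain r bs where bs: "set bs \<subseteq> F - {0}" and l: "r + length bs = length as" and an: "anis F (pfister_list bs)"
    and d: "diso F (pfister_list as) (pfister_list (replicate r 1 @ bs))"
    using exist[OF c2 F as] by blast
  obtain rK bsK where bsK: "set bsK \<subseteq> ?K - {0}" and lK: "rK + length bsK = length as"
    and anK: "anis ?K (pfister_list bsK)"
    and dK: "diso ?K (pfister_list as) (pfister_list (replicate rK 1 @ bsK))"
    using exist[OF c2 Ksf asK] by blast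
  have i1: "pf_index F as = r" by (rule pf_index_eq[OF c2 F bs l an d])
  have i2: "pf_index ?K as = rK" by (rule pf_index_eq[OF c2 Ksf bsK lK anK dK])
  define N where "N = qv F (pfister_list bs)"
  have bsF: "set bs \<subseteq> F" using bs by auto
  have NasF: "qv F (pfister_list as) = N"
    using Q_iso[OF F diso_iso[OF F d]] Q_pf[OF F, of as] Q_pf[OF F, of "replicate r 1 @ bs"] l qv_rep[OF c2 F]
    unfolding N_def by simp
  have aN: "\<alpha> \<in> N" using aQ NasF by simp
  have NasK: "qv ?K (pfister_list as) = N"
  proof -
    have "qv ?K (pfister_list as) = {u + \<alpha> * w | u w. u \<in> N \<and> w \<in> N}"
      using qv_ext[OF c2 F aF s] NasF by simp
    also have "\<dots> = N"
    proof (intro set_eqI iffI)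
      fix z assume "z \<in> {u + \<alpha> * w | u w. u \<in> N \<and> w \<in> N}"
      then obtain u w where "u \<in> N" "w \<in> N" "z = u + \<alpha> * w" by blast
      then show "z \<in> N" using aN qv_add[OF c2 F] qv_mult[OF c2 F bsF] unfolding N_def by simp
    next
      fix z assume "z \<in> N"
      then show "z \<in> {u + \<alpha> * w | u w. u \<in> N \<and> w \<in> N}"
        using qv_0[OF F] unfolding N_def by force
    qed
    finally show ?thesis .
  qed
  have NbsK: "qv ?K (pfister_list bsK) = N"
    using Q_iso[OF Ksf diso_iso[OF Ksf dK]] Q_pf[OF Ksf, of as] Q_pf[OF Ksf, of "replicate rK 1 @ bsK"] lK
      qv_rep[OF c2 Ksf] NasK by simp
  have Nab: "qv F (pfister_list (\<alpha> # bsK)) = N"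
    using qv_Cons[OF F, of \<alpha> bsK] qv_ext[OF c2 F aF s, of "pfister_list bsK"] NbsK by simp
  have anab: "anis F (pfister_list (\<alpha> # bsK))"
    unfolding anis_def
  proof (intro allI impI, elim conjE)
    let ?m = "2 ^ length bsK"
    let ?e = "pfister_list bsK"
    fix v assume v: "vec_on F (length (pfister_list (\<alpha> # bsK))) v"
      and nz: "nonzero_vec (length (pfister_list (\<alpha> # bsK))) v"
    show "bv (pfister_list (\<alpha> # bsK)) v v \<noteq> 0"
    proof
      assume z: "bv (pfister_list (\<alpha> # bsK)) v v = 0"
      define w where "w i = v i + sh ?m v i * s" for i
      have "bv ?e w w = bv ?e v v + \<alpha> * bv ?e (sh ?m v) (sh ?m v)"
        unfolding w_def by (rule bv_ext_sq[OF c2 s])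
      also have "\<dots> = 0" using z by (simp only: bv_pl_Cons)
      finally have bw: "bv ?e w w = 0" .
      have vF: "v i \<in> F" "v (i + ?m) \<in> F" if "i < ?m" for i
        using v that unfolding vec_on_def by auto
      have "vec_on ?K (length ?e) w" unfolding vec_on_def w_def K using vF by auto
      then have "\<not> nonzero_vec ?m w" using anK bw unfolding anis_def by auto
      then have w0: "v i + v (i + ?m) * s = 0" if "i < ?m" for i
        using that unfolding nonzero_vec_def w_def by auto
      have v0: "v i = 0 \<and> v (i + ?m) = 0" if i: "i < ?m" for i
      proof (cases "v (i + ?m) = 0")
        case True then show ?thesis using w0[OF i] by simp
      next
        case False
        then have "s = - v i / v (i + ?m)" using w0[OF i] by (simp add: field_simps eq_neg_iff_add_eq_0)
        then have "s \<in> F" using vF[OF i] sf_divide[OF F] sf_uminus[OF F] by simp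
        then show ?thesis using sF by simp
      qed
      obtain j where j: "j < 2 * ?m" "v j \<noteq> 0" using nz unfolding nonzero_vec_def by (auto simp: mult_2)
      show False
      proof (cases "j < ?m")
        case True then show False using v0 j by blast
      next
        case False
        then have "j - ?m < ?m" "j - ?m + ?m = j" using j by auto
        then show False using v0 j by metis
      qed
    qed
  qed
  have "length (pfister_list (\<alpha> # bsK)) \<le> length (pfister_list bs)"
    by (rule dim[OF c2 F anab]) (simp only: Nab N_def subset_refl)
  moreover have "length (pfister_list bs) \<le> length (pfister_list (\<alpha> # bsK))"
    by (rule dim[OF c2 F an]) (simp only: Nab N_def subset_refl)
  ultimately have "(2::nat) ^ length bs = 2 ^ Suc (length bsK)" by simp
  then have "length bs = Suc (length bsK)" using power_inject_exp[of 2] by (metis one_less_numeral_iff semiring_norm(76))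
  then show ?thesis using i1 i2 l lK by simp
qed


end
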